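(* Let $m\ge2$ be even and $n\ge 2$. If $\mathcal{C}_1$ and $\mathcal{C}_2$ are positive semi-definite Cauchy tensors of order $m$ and dimension $n$, then their Hadamard product $\mathcal{C}_1\circ\mathcal{C}_2$ is positive semi-definite.
   Context: The Cauchy tensor with generating vector $c\in\mathbb{R}^n$ (with all sums $c_{i_1}+\cdots+c_{i_m}\neq0$) has entries $\frac{1}{c_{i_1}+\cdots+c_{i_m}}$, $i_j\in\{1,\dots,n\}$. The Hadamard product of tensors $\mathcal{A}=(a_{i_1\cdots i_m})$, $\mathcal{B}=(b_{i_1\cdots i_m})$ is $\mathcal{A}\circ\mathcal{B}=(a_{i_1\cdots i_m}b_{i_1\cdots i_m})$. A tensor $\mathcal{A}$ of even order is positive semi-definite if $\sum_{i_1,\dots,i_m}a_{i_1\cdots i_m}x_{i_1}\cdots x_{i_m}\ge0$ for all $x\in\mathbb{R}^n$. *)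

theory Defs
  imports "HOL-Analysis.Analysis"
begin

text \<open>A real tensor of order m and dimension n is represented as a function on
index tuples, i.e. lists of length m with entries in {0..<n} (0-based indexing).\<close>

definition indices :: "nat \<Rightarrow> nat \<Rightarrow> nat list set" where
  "indices m n = {is. length is = m \<and> set is \<subseteq> {..<n}}"

definition tensor_form :: "nat \<Rightarrow> nat \<Rightarrow> (nat list \<Rightarrow> real) \<Rightarrow> (nat \<Rightarrow> real) \<Rightarrow> real" where
  "tensor_form m n A x = (\<Sum>is\<in>indices m n. A is * (\<Prod>j<m. x (is ! j)))"

definition psd_tensor :: "nat \<Rightarrow> nat \<Rightarrow> (nat list \<Rightarrow> real) \<Rightarrow> bool" where
  "psd_tensor m n A \<longleftrightarrow> (\<forall>x :: nat \<Rightarrow> real. tensor_form m n A x \<ge> 0)"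

definition cauchy_tensor :: "nat \<Rightarrow> nat \<Rightarrow> (nat \<Rightarrow> real) \<Rightarrow> nat list \<Rightarrow> real" where
  "cauchy_tensor m n c = (\<lambda>is. 1 / (\<Sum>j<m. c (is ! j)))"

definition is_cauchy_tensor :: "nat \<Rightarrow> nat \<Rightarrow> (nat list \<Rightarrow> real) \<Rightarrow> bool" where
  "is_cauchy_tensor m n A \<longleftrightarrow>
     (\<exists>c :: nat \<Rightarrow> real.
        (\<forall>is\<in>indices m n. (\<Sum>j<m. c (is ! j)) \<noteq> 0) \<and>
        (\<forall>is\<in>indices m n. A is = cauchy_tensor m n c is))"

definition hadamard :: "(nat list \<Rightarrow> real) \<Rightarrow> (nat list \<Rightarrow> real) \<Rightarrow> nat list \<Rightarrow> real" where
  "hadamard A B = (\<lambda>is. A is * B is)"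

end

theory Submission
  imports Defs
begin

lemma finite_indices: "finite (indices m n)"
proof -
  have "indices m n = {xs. set xs \<subseteq> {..<n} \<and> length xs = m}"
    unfolding indices_def by auto
  thus ?thesis using finite_lists_length_eq[of "{..<n}" m] by simp
qed

lemma S_pos:
  assumes "\<forall>i<n. d i > (0::real)" "m \<ge> 1" "is \<in> indices m n"
  shows "(\<Sum>j<m. d (is ! j)) > 0"
proof -
  have "\<forall>j<m. d (is ! j) > 0" using assms unfolding indices_def
    by (auto simp: subset_iff)
  thus ?thesis using assms(2) by (intro sum_pos) (auto simp: lessThan_empty_iff)
qed

lemma main:
  assumes pos: "\<forall>i<n. d i > (0::real)" and psd: "psd_tensor m n A" and m1: "m \<ge> 1"
  shows "tensor_form m n (\<lambda>is. A is / (\<Sum>j<m. d (is ! j))) x \<ge> 0"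
proof -
  define S where "S is = (\<Sum>j<m. d (is ! j))" for "is"
  define f where "f t = (\<Sum>is\<in>indices m n. A is * (\<Prod>j<m. x (is ! j)) * t powr (S is - 1))" for t :: real
  have int: "(f has_integral tensor_form m n (\<lambda>is. A is / (\<Sum>j<m. d (is ! j))) x) {0..1}"
    unfolding f_def tensor_form_def
  proof (rule has_integral_sum[OF finite_indices])
    fix "is" assume i: "is \<in> indices m n"
    have Sp: "S is > 0" using S_pos[OF pos m1 i] by (simp add: S_def)
    have "((\<lambda>t. t powr (S is - 1)) has_integral (1 powr (S is - 1 + 1) / (S is - 1 + 1))) {0..1::real}"
      by (rule has_integral_powr_from_0) (use Sp in auto)
    hence "((\<lambda>t. t powr (S is - 1)) has_integral (1 / S is)) {0..1::real}" by simp
    from has_integral_mult_right[OF this, of "A is * (\<Prod>j<m. x (is ! j))"]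
    show "((\<lambda>t. A is * (\<Prod>j<m. x (is ! j)) * t powr (S is - 1)) has_integral
        A is / (\<Sum>j<m. d (is ! j)) * (\<Prod>j<m. x (is ! j))) {0..1}"
      by (simp add: S_def)
  qed
  show ?thesis
  proof (rule has_integral_nonneg[OF int])
    fix t :: real assume t: "t \<in> {0..1}"
    show "0 \<le> f t"
    proof (cases "t = 0")
      case True thus ?thesis by (simp add: f_def)
    next
      case False
      hence tp: "t > 0" using t by auto
      define y where "y i = x i * t powr d i" for i
      have "f t = tensor_form m n A y * t powr (-1)"
        unfolding f_def tensor_form_def sum_distrib_right
      proof (rule sum.cong[OF refl])
        fix "is"
        have "t powr (S is - 1) = (\<Prod>j<m. t powr d (is ! j)) * t powr (-1)"
          using tp by (simp add: S_def powr_diff powr_sum[symmetric] powr_minus divide_inverse)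
        thus "A is * (\<Prod>j<m. x (is ! j)) * t powr (S is - 1) = A is * (\<Prod>j<m. y (is ! j)) * t powr - 1"
          by (simp add: y_def prod.distrib)
      qed
      also have "\<dots> \<ge> 0" using psd unfolding psd_tensor_def by simp
      finally show ?thesis .
    qed
  qed
qed

lemma cauchy_pos:
  assumes "m \<ge> 1" "is_cauchy_tensor m n C" "psd_tensor m n C"
  shows "\<exists>c. (\<forall>i<n. c i > 0) \<and> (\<forall>is\<in>indices m n. C is = 1 / (\<Sum>j<m. c (is ! j)))"
proof -
  obtain c where nz: "\<forall>is\<in>indices m n. (\<Sum>j<m. c (is ! j)) \<noteq> 0"
    and eq: "\<forall>is\<in>indices m n. C is = cauchy_tensor m n c is"
    using assms(2) unfolding is_cauchy_tensor_def by blast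
  have "c i > 0" if i: "i < n" for i
  proof -
    define x where "x k = (if k = i then 1 else 0::real)" for k
    have r: "replicate m i \<in> indices m n" using i by (auto simp: indices_def)
    have "tensor_form m n C x = C (replicate m i) * (\<Prod>j<m. x (replicate m i ! j))"
      unfolding tensor_form_def
    proof (rule sum.remove[OF finite_indices r, THEN trans], rule ssubst[where P="\<lambda>z. _ + z = _"])
      show "(\<Sum>is\<in>indices m n - {replicate m i}. C is * (\<Prod>j<m. x (is ! j))) = 0"
      proof (rule sum.neutral, rule ballI)
        fix "is" assume a: "is \<in> indices m n - {replicate m i}"
        hence len: "length is = m" by (auto simp: indices_def)
        have "\<exists>j<m. is ! j \<noteq> i"
        proof (rule ccontr)
          assume "\<not> ?thesis"
          hence "is = replicate m i" using len by (auto intro: nth_equalityI)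
          thus False using a by auto
        qed
        then obtain j where "j < m" "is ! j \<noteq> i" by blast
        hence "(\<Prod>j<m. x (is ! j)) = 0"
          by (intro prod_zero) (auto simp: x_def)
        thus "C is * (\<Prod>j<m. x (is ! j)) = 0" by simp
      qed
    qed simp
    also have "\<dots> = 1 / (real m * c i)"
    proof -
      have s: "(\<Sum>j<m. c (replicate m i ! j)) = real m * c i" by simp
      have p: "(\<Prod>j<m. x (replicate m i ! j)) = 1" by (simp add: x_def)
      have "C (replicate m i) = cauchy_tensor m n c (replicate m i)" by (rule eq[rule_format, OF r])
      also have "\<dots> = 1 / (real m * c i)" by (simp only: cauchy_tensor_def s)
      finally have C: "C (replicate m i) = 1 / (real m * c i)" .
      show ?thesis by (simp only: C p mult_1_right)
    qed
    finally have ge: "1 / (real m * c i) \<ge> 0" using assms(3) unfolding psd_tensor_def by metis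
    have ne: "real m * c i \<noteq> 0"
    proof -
      have "(\<Sum>j<m. c (replicate m i ! j)) = real m * c i" by simp
      moreover have "(\<Sum>j<m. c (replicate m i ! j)) \<noteq> 0" by (rule nz[rule_format, OF r])
      ultimately show ?thesis by simp
    qed
    have "real m * c i \<ge> 0" using zero_le_divide_1_iff[THEN iffD1, OF ge] .
    hence mc: "real m * c i > 0" using ne by linarith
    moreover have "real m > 0" using assms(1) by simp
    ultimately show ?thesis using mc zero_less_mult_pos by blast
  qed
  thus ?thesis using eq unfolding cauchy_tensor_def by blast
qed

theorem corollary3p2:
  fixes m n :: nat and C1 C2 :: "nat list \<Rightarrow> real"
  assumes "m \<ge> 2" and "even m" and "n \<ge> 2"
    and "is_cauchy_tensor m n C1" and "psd_tensor m n C1"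
    and "is_cauchy_tensor m n C2" and "psd_tensor m n C2"
  shows "psd_tensor m n (hadamard C1 C2)"
proof -
  have m1: "m \<ge> 1" using assms(1) by simp
  obtain d where d: "\<forall>i<n. d i > 0" "\<forall>is\<in>indices m n. C2 is = 1 / (\<Sum>j<m. d (is ! j))"
    using cauchy_pos[OF m1 assms(6,7)] by blast
  show ?thesis unfolding psd_tensor_def
  proof
    fix x
    have "tensor_form m n (hadamard C1 C2) x = tensor_form m n (\<lambda>is. C1 is / (\<Sum>j<m. d (is ! j))) x"
      unfolding tensor_form_def hadamard_def using d(2) by (intro sum.cong) auto
    also have "\<dots> \<ge> 0" by (rule main[OF d(1) assms(5) m1])
    finally show "tensor_form m n (hadamard C1 C2) x \<ge> 0" .
  qed
qed

end
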